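(* Let $P,Q$ be probability distributions on a finite set $\mathcal{X}$, $\delta\in(0,1)$, and assume $\sum_x\min\{P(x),Q(x)\}<1-\delta$. Let $\lambda_P$ be such that $\tilde P(x) := \min\{P(x),\lambda_P Q(x)\}$ satisfies $\sum_x\tilde P(x) = 1-\delta$, and let $\lambda_Q$ be such that $\tilde Q(x) := \min\{Q(x),\tilde P(x)/\lambda_Q\}$ satisfies $\sum_x\tilde Q(x)=1-\delta$. Then $\lambda_P\ge1\ge\lambda_Q$, and for every $\alpha>1$, the pair $(P',Q') = (\tilde P/(1-\delta),\tilde Q/(1-\delta))$ attains the infimum defining the approximate Rényi divergence, i.e. $$D^\delta_\alpha(P\|Q) = D_\alpha\!\left(\tfrac{\tilde P}{1-\delta}\,\Big\|\,\tfrac{\tilde Q}{1-\delta}\right).$$ In particular the minimizing pair does not depend on $\alpha$.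
   Context: For $\alpha>1$, $D_\alpha(P\|Q)=\frac{1}{\alpha-1}\log\sum_x P(x)^\alpha Q(x)^{1-\alpha}$ (infinite if $P$ is not absolutely continuous w.r.t. $Q$), and $D^\delta_\alpha(P\|Q)=\inf\{D_\alpha(P'\|Q'): P=(1-\delta)P'+\delta P'',\ Q=(1-\delta)Q'+\delta Q''\}$ over probability distributions $P',P'',Q',Q''$, equivalently over distributions $P',Q'$ with $P'\le P/(1-\delta)$ and $Q'\le Q/(1-\delta)$ pointwise. *)

theory Defs
  imports "HOL-Analysis.Analysis"
begin

definition is_dist :: "('a::finite \<Rightarrow> real) \<Rightarrow> bool" where
  "is_dist P \<longleftrightarrow> (\<forall>x. P x \<ge> 0) \<and> (\<Sum>x\<in>UNIV. P x) = 1"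

definition renyi_div :: "real \<Rightarrow> ('a::finite \<Rightarrow> real) \<Rightarrow> ('a \<Rightarrow> real) \<Rightarrow> ereal" where
  "renyi_div \<alpha> P Q =
     (if (\<forall>x. Q x = 0 \<longrightarrow> P x = 0)
      then ereal (ln (\<Sum>x\<in>UNIV. P x powr \<alpha> * Q x powr (1 - \<alpha>)) / (\<alpha> - 1))
      else \<infinity>)"

definition approx_feasible :: "real \<Rightarrow> ('a::finite \<Rightarrow> real) \<Rightarrow> ('a \<Rightarrow> real)
     \<Rightarrow> ('a \<Rightarrow> real) \<Rightarrow> ('a \<Rightarrow> real) \<Rightarrow> bool" where
  "approx_feasible \<delta> P Q P' Q' \<longleftrightarrow>
     (\<exists>P'' Q''. is_dist P' \<and> is_dist P'' \<and> is_dist Q' \<and> is_dist Q'' \<and>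
        (\<forall>x. P x = (1 - \<delta>) * P' x + \<delta> * P'' x) \<and>
        (\<forall>x. Q x = (1 - \<delta>) * Q' x + \<delta> * Q'' x))"

definition approx_renyi_div :: "real \<Rightarrow> real \<Rightarrow> ('a::finite \<Rightarrow> real) \<Rightarrow> ('a \<Rightarrow> real) \<Rightarrow> ereal" where
  "approx_renyi_div \<alpha> \<delta> P Q =
     (INF PQ \<in> {(P', Q'). approx_feasible \<delta> P Q P' Q'}. renyi_div \<alpha> (fst PQ) (snd PQ))"

end

theory Submission
  imports Defs
begin

lemma tangent_powr:
  fixes t r a :: real
  assumes "a > 1" "r > 0" "t \<ge> 0"
  shows "r powr a + a * r powr (a - 1) * (t - r) \<le> t powr a"
proof (cases "t = 0")
  case True
  have "r powr a = r * r powr (a - 1)" using assms by (simp add: powr_diff)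
  then show ?thesis using True assms
    by (simp add: algebra_simps)
next
  case False
  then have t: "t > 0" using assms by simp
  have "a * r powr (a - 1) * (t - r) \<le> t powr a - r powr a"
  proof (rule f''_imp_f'[where C="{0<..}" and f="\<lambda>t. t powr a"
        and f'="\<lambda>t. a * t powr (a - 1)" and f''="\<lambda>t. a * ((a - 1) * t powr (a - 1 - 1))"])
    show "convex {0::real<..}" by simp
    show "\<And>x. x \<in> {0<..} \<Longrightarrow> ((\<lambda>t. t powr a) has_real_derivative a * x powr (a - 1)) (at x)"
      by (auto intro!: derivative_eq_intros)
    show "\<And>x. x \<in> {0<..} \<Longrightarrow> ((\<lambda>t. a * t powr (a - 1)) has_real_derivative a * ((a - 1) * x powr (a - 1 - 1))) (at x)"
      by (auto intro!: derivative_eq_intros)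
    show "\<And>x. x \<in> {0<..} \<Longrightarrow> 0 \<le> a * ((a - 1) * x powr (a - 1 - 1))"
      using assms by auto
  qed (use assms t in auto)
  then show ?thesis by simp
qed

lemma phi_tangent:
  fixes a p q r :: real
  assumes "a > 1" "r > 0" "p \<ge> 0" "q \<ge> 0" "q = 0 \<Longrightarrow> p = 0"
  shows "a * r powr (a - 1) * p + (1 - a) * r powr a * q \<le> p powr a * q powr (1 - a)"
proof (cases "q = 0")
  case True
  then show ?thesis using assms by simp
next
  case False
  then have q: "q > 0" using assms by simp
  define t where "t = p / q"
  have t: "t \<ge> 0" using assms q by (simp add: t_def)
  have p: "p = t * q" using q by (simp add: t_def)
  have "p powr a * q powr (1 - a) = t powr a * (q powr a * q powr (1 - a))"
    using t q by (simp add: p powr_mult)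
  also have "q powr a * q powr (1 - a) = q" using q by (simp add: powr_add[symmetric])
  finally have eq: "p powr a * q powr (1 - a) = q * t powr a" by simp
  have "q * (r powr a + a * r powr (a - 1) * (t - r)) \<le> q * t powr a"
    using tangent_powr[OF assms(1,2) t] q by simp
  moreover have "r powr a = r * r powr (a - 1)" using assms by (simp add: powr_diff)
  ultimately show ?thesis unfolding eq using q by (simp add: p algebra_simps)
qed

lemma phi_eq:
  fixes a q r :: real
  assumes "r > 0" "q \<ge> 0"
  shows "a * r powr (a - 1) * (r * q) + (1 - a) * r powr a * q = (r * q) powr a * q powr (1 - a)"
proof (cases "q = 0")
  case True then show ?thesis by simp
next
  case False
  then have q: "q > 0" using assms by simp
  have "(r * q) powr a * q powr (1 - a) = r powr a * (q powr a * q powr (1 - a))"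
    using assms q by (simp add: powr_mult)
  also have "q powr a * q powr (1 - a) = q" using q by (simp add: powr_add[symmetric])
  finally have "(r * q) powr a * q powr (1 - a) = r powr a * q" .
  moreover have "r powr a = r * r powr (a - 1)" using assms by (simp add: powr_diff)
  ultimately show ?thesis by (simp add: algebra_simps)
qed

theorem mainTheorem9:
  fixes P Q :: "'a::finite \<Rightarrow> real" and \<delta> lamP lamQ :: real
  assumes "is_dist P" and "is_dist Q"
    and "0 < \<delta>" and "\<delta> < 1"
    and "(\<Sum>x\<in>UNIV. min (P x) (Q x)) < 1 - \<delta>"
    and "(\<Sum>x\<in>UNIV. min (P x) (lamP * Q x)) = 1 - \<delta>"
    and "(\<Sum>x\<in>UNIV. min (Q x) (min (P x) (lamP * Q x) / lamQ)) = 1 - \<delta>"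
  shows "lamP \<ge> 1 \<and> 1 \<ge> lamQ \<and>
    (\<forall>\<alpha>>1.
       approx_feasible \<delta> P Q
         (\<lambda>x. min (P x) (lamP * Q x) / (1 - \<delta>))
         (\<lambda>x. min (Q x) (min (P x) (lamP * Q x) / lamQ) / (1 - \<delta>)) \<and>
       approx_renyi_div \<alpha> \<delta> P Q =
         renyi_div \<alpha> (\<lambda>x. min (P x) (lamP * Q x) / (1 - \<delta>))
                    (\<lambda>x. min (Q x) (min (P x) (lamP * Q x) / lamQ) / (1 - \<delta>)))"
proof -
  define c where "c = 1 - \<delta>"
  define Pt where "Pt x = min (P x) (lamP * Q x)" for x
  define Qt where "Qt x = min (Q x) (Pt x / lamQ)" for x
  have c: "c > 0" using assms(4) by (simp add: c_def)
  have P0: "\<And>x. P x \<ge> 0" and sP: "(\<Sum>x\<in>UNIV. P x) = 1"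
    using assms(1) by (auto simp: is_dist_def)
  have Q0: "\<And>x. Q x \<ge> 0" and sQ: "(\<Sum>x\<in>UNIV. Q x) = 1"
    using assms(2) by (auto simp: is_dist_def)
  have sPt: "(\<Sum>x\<in>UNIV. Pt x) = c" using assms(6) by (simp add: Pt_def c_def)
  have sQt: "(\<Sum>x\<in>UNIV. Qt x) = c" using assms(7) by (simp add: Qt_def Pt_def c_def)
  have lamP_pos: "lamP > 0"
  proof (rule ccontr)
    assume "\<not> lamP > 0"
    then have "\<And>x. lamP * Q x \<le> 0" using Q0 mult_nonpos_nonneg[of lamP] by simp
    then have "\<And>x. Pt x \<le> 0" unfolding Pt_def by (simp add: min_le_iff_disj)
    then have "(\<Sum>x\<in>UNIV. Pt x) \<le> 0" by (simp add: sum_nonpos)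
    then show False using sPt c by simp
  qed
  have lamP1: "lamP \<ge> 1"
  proof (rule ccontr)
    assume "\<not> lamP \<ge> 1"
    then have l: "lamP \<le> 1" by simp
    have "Pt x \<le> min (P x) (Q x)" for x
    proof -
      have "lamP * Q x \<le> 1 * Q x" by (rule mult_right_mono) (use l Q0 in auto)
      then show ?thesis unfolding Pt_def by linarith
    qed
    then have "(\<Sum>x\<in>UNIV. Pt x) \<le> (\<Sum>x\<in>UNIV. min (P x) (Q x))" by (simp add: sum_mono)
    then show False using sPt assms(5) unfolding c_def by linarith
  qed
  have Pt_nn: "\<And>x. Pt x \<ge> 0" using P0 Q0 lamP_pos by (simp add: Pt_def)
  have Pt_le: "\<And>x. Pt x \<le> P x" by (simp add: Pt_def)
  have Pt_leQ: "\<And>x. Pt x \<le> lamP * Q x" by (simp add: Pt_def)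
  have lamQ_pos: "lamQ > 0"
  proof (rule ccontr)
    assume "\<not> lamQ > 0"
    then have "\<And>x. Pt x / lamQ \<le> 0" using Pt_nn by (simp add: divide_nonneg_nonpos)
    then have "\<And>x. Qt x \<le> 0" unfolding Qt_def by (simp add: min_le_iff_disj)
    then have "(\<Sum>x\<in>UNIV. Qt x) \<le> 0" by (simp add: sum_nonpos)
    then show False using sQt c by simp
  qed
  have Qt_nn: "\<And>x. Qt x \<ge> 0" using Q0 Pt_nn lamQ_pos by (simp add: Qt_def)
  have Qt_le: "\<And>x. Qt x \<le> Q x" by (simp add: Qt_def)
  have Qt_le2: "\<And>x. Qt x \<le> Pt x / lamQ" by (simp add: Qt_def)
  have lamQ1: "lamQ \<le> 1"
  proof -
    have "(\<Sum>x\<in>UNIV. Qt x) \<le> (\<Sum>x\<in>UNIV. Pt x / lamQ)" using Qt_le2 by (simp add: sum_mono)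
    also have "\<dots> = c / lamQ" using sPt by (simp add: sum_divide_distrib[symmetric])
    finally have "c \<le> c / lamQ" using sQt by simp
    then have "c * lamQ \<le> c" using lamQ_pos by (simp add: le_divide_eq)
    then show ?thesis using c by simp
  qed
  have Qt0: "Pt x = 0 \<and> (Q x = 0 \<or> P x = 0)" if "Qt x = 0" for x
  proof (cases "Q x = 0")
    case True
    then show ?thesis using Pt_leQ[of x] Pt_nn[of x] by simp
  next
    case False
    then have Qp: "Q x > 0" using Q0[of x] by simp
    have "Pt x / lamQ \<ge> 0" using Pt_nn[of x] lamQ_pos by simp
    then have "Pt x / lamQ = 0" using that Qp unfolding Qt_def by (simp add: min_def split: if_splits)
    then have "Pt x = 0" using lamQ_pos by simp
    moreover have "lamP * Q x > 0" using Qp lamP_pos by simp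
    ultimately have "P x = 0" unfolding Pt_def by (simp add: min_def split: if_splits)
    then show ?thesis using \<open>Pt x = 0\<close> by simp
  qed
  have Ptlt: "Pt x = lamP * Q x \<and> Qt x = Q x" if "Pt x < P x" for x
  proof -
    have e: "Pt x = lamP * Q x" using that unfolding Pt_def by (simp add: min_def split: if_splits)
    have "Q x \<le> lamP * Q x / lamQ"
    proof -
      have "lamQ * Q x \<le> lamP * Q x" by (rule mult_right_mono) (use lamQ1 lamP1 Q0 in auto)
      then show ?thesis using lamQ_pos by (simp add: le_divide_eq mult.commute)
    qed
    then have "Qt x = Q x" unfolding Qt_def e[symmetric] using e by simp
    then show ?thesis using e by simp
  qed
  have Qtlt: "Qt x = Pt x / lamQ" if "Qt x < Q x" for x
    using that unfolding Qt_def by (simp add: min_def split: if_splits)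
  define r where "r x = (if Qt x > 0 then Pt x / Qt x else lamQ)" for x
  have r_pos: "\<And>x. r x > 0"
  proof -
    fix x
    show "r x > 0"
    proof (cases "Qt x > 0")
      case True
      then have "Pt x / lamQ > 0" using Qt_le2[of x] by linarith
      then have "Pt x > 0" using lamQ_pos by (simp add: zero_less_divide_iff)
      then show ?thesis using True by (simp add: r_def)
    qed (use lamQ_pos in \<open>simp add: r_def\<close>)
  qed
  have r_ge: "\<And>x. r x \<ge> lamQ"
  proof -
    fix x
    show "r x \<ge> lamQ"
    proof (cases "Qt x > 0")
      case True
      have "lamQ * Qt x \<le> Pt x" using Qt_le2[of x] lamQ_pos by (simp add: le_divide_eq mult.commute)
      then show ?thesis using True by (simp add: r_def le_divide_eq)
    qed (simp add: r_def)
  qed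
  have r_eqQ: "r x = lamQ" if "Qt x < Q x" for x
  proof (cases "Qt x > 0")
    case True
    have "Qt x = Pt x / lamQ" using Qtlt[OF that] .
    then have "Pt x = lamQ * Qt x" using lamQ_pos by (simp add: field_simps)
    then show ?thesis using True by (simp add: r_def)
  qed (simp add: r_def)
  have r_le: "\<And>x. r x \<le> lamP"
  proof -
    fix x
    show "r x \<le> lamP"
    proof (cases "Qt x < Q x")
      case True
      then show ?thesis using r_eqQ[OF True] lamQ1 lamP1 by simp
    next
      case False
      then have e: "Qt x = Q x" using Qt_le[of x] by simp
      show ?thesis
      proof (cases "Qt x > 0")
        case True
        then show ?thesis using Pt_leQ[of x] e by (simp add: r_def divide_le_eq)
      qed (use lamQ1 lamP1 in \<open>simp add: r_def\<close>)
    qed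
  qed
  have r_eqP: "r x = lamP" if "Pt x < P x" "Qt x > 0" for x
    using Ptlt[OF that(1)] that(2) by (simp add: r_def)
  define p0 where "p0 x = Pt x / c" for x
  define q0 where "q0 x = Qt x / c" for x
  have p0_eq: "(\<lambda>x. min (P x) (lamP * Q x) / (1 - \<delta>)) = p0"
    by (simp add: fun_eq_iff p0_def Pt_def c_def)
  have q0_eq: "(\<lambda>x. min (Q x) (min (P x) (lamP * Q x) / lamQ) / (1 - \<delta>)) = q0"
    by (simp add: fun_eq_iff q0_def Qt_def Pt_def c_def)
  have sp0: "(\<Sum>x\<in>UNIV. p0 x) = 1" using sPt c by (simp add: p0_def sum_divide_distrib[symmetric])
  have sq0: "(\<Sum>x\<in>UNIV. q0 x) = 1" using sQt c by (simp add: q0_def sum_divide_distrib[symmetric])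
  have p0_nn: "\<And>x. p0 x \<ge> 0" using Pt_nn c by (simp add: p0_def)
  have q0_nn: "\<And>x. q0 x \<ge> 0" using Qt_nn c by (simp add: q0_def)
  have feas: "approx_feasible \<delta> P Q p0 q0"
    unfolding approx_feasible_def
  proof (rule exI[where x="\<lambda>x. (P x - Pt x) / \<delta>"], rule exI[where x="\<lambda>x. (Q x - Qt x) / \<delta>"],
      intro conjI allI)
    show "is_dist p0" using p0_nn sp0 by (simp add: is_dist_def)
    show "is_dist q0" using q0_nn sq0 by (simp add: is_dist_def)
    show "is_dist (\<lambda>x. (P x - Pt x) / \<delta>)"
    proof -
      have "(\<Sum>x\<in>UNIV. (P x - Pt x) / \<delta>) = ((\<Sum>x\<in>UNIV. P x) - (\<Sum>x\<in>UNIV. Pt x)) / \<delta>"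
        by (simp add: sum_divide_distrib[symmetric] sum_subtractf)
      also have "\<dots> = 1" using sP sPt assms(3) by (simp add: c_def)
      finally show ?thesis using Pt_le assms(3) by (simp add: is_dist_def)
    qed
    show "is_dist (\<lambda>x. (Q x - Qt x) / \<delta>)"
    proof -
      have "(\<Sum>x\<in>UNIV. (Q x - Qt x) / \<delta>) = ((\<Sum>x\<in>UNIV. Q x) - (\<Sum>x\<in>UNIV. Qt x)) / \<delta>"
        by (simp add: sum_divide_distrib[symmetric] sum_subtractf)
      also have "\<dots> = 1" using sQ sQt assms(3) by (simp add: c_def)
      finally show ?thesis using Qt_le assms(3) by (simp add: is_dist_def)
    qed
    fix x
    show "P x = (1 - \<delta>) * p0 x + \<delta> * ((P x - Pt x) / \<delta>)"
      using c assms(3) by (simp add: p0_def c_def[symmetric])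
    show "Q x = (1 - \<delta>) * q0 x + \<delta> * ((Q x - Qt x) / \<delta>)"
      using c assms(3) by (simp add: q0_def c_def[symmetric])
  qed
  have abs0: "\<forall>x. q0 x = 0 \<longrightarrow> p0 x = 0"
    using Qt0 c by (simp add: p0_def q0_def)
  have main: "approx_renyi_div \<alpha> \<delta> P Q = renyi_div \<alpha> p0 q0" if alpha: "\<alpha> > 1" for \<alpha>
  proof -
    define S0 where "S0 = (\<Sum>x\<in>UNIV. p0 x powr \<alpha> * q0 x powr (1 - \<alpha>))"
    define L where "L f g = (\<Sum>x\<in>UNIV. \<alpha> * r x powr (\<alpha> - 1) * f x + (1 - \<alpha>) * r x powr \<alpha> * g x)"
      for f g :: "'a \<Rightarrow> real"
    have S0L: "S0 = L p0 q0"
      unfolding S0_def L_def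
    proof (rule sum.cong[OF refl])
      fix x
      show "p0 x powr \<alpha> * q0 x powr (1 - \<alpha>) = \<alpha> * r x powr (\<alpha> - 1) * p0 x + (1 - \<alpha>) * r x powr \<alpha> * q0 x"
      proof (cases "Qt x > 0")
        case True
        then have "p0 x = r x * q0 x" by (simp add: p0_def q0_def r_def)
        then show ?thesis using phi_eq[OF r_pos[of x] q0_nn[of x], where a=\<alpha>] by simp
      next
        case False
        then have "Qt x = 0" using Qt_nn[of x] by simp
        then show ?thesis using Qt0[of x] by (simp add: p0_def q0_def)
      qed
    qed
    have S0pos: "S0 > 0"
    proof -
      obtain x where x: "p0 x > 0"
        using sp0 p0_nn by (metis less_eq_real_def sum_nonpos zero_less_one not_le)
      then have qx: "q0 x > 0" using abs0 q0_nn[of x] by (metis less_eq_real_def less_irrefl)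
      have "0 < p0 x powr \<alpha> * q0 x powr (1 - \<alpha>)" using x qx by simp
      also have "\<dots> \<le> S0" unfolding S0_def
        by (rule member_le_sum) (auto intro: mult_nonneg_nonneg)
      finally show ?thesis .
    qed
    have cand: "renyi_div \<alpha> p0 q0 = ereal (ln S0 / (\<alpha> - 1))"
      using abs0 by (simp add: renyi_div_def S0_def)
    have lower: "renyi_div \<alpha> p0 q0 \<le> renyi_div \<alpha> P' Q'" if fe: "approx_feasible \<delta> P Q P' Q'" for P' Q'
    proof (cases "\<forall>x. Q' x = 0 \<longrightarrow> P' x = 0")
      case False
      then have "renyi_div \<alpha> P' Q' = \<infinity>" unfolding renyi_div_def by auto
      then show ?thesis by simp
    next
      case ac: True
      obtain P'' Q'' where dP': "is_dist P'" and dP'': "is_dist P''" and dQ': "is_dist Q'"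
        and dQ'': "is_dist Q''" and eP: "\<And>x. P x = (1 - \<delta>) * P' x + \<delta> * P'' x"
        and eQ: "\<And>x. Q x = (1 - \<delta>) * Q' x + \<delta> * Q'' x"
        using fe unfolding approx_feasible_def by blast
      have P'nn: "\<And>x. P' x \<ge> 0" and sP': "(\<Sum>x\<in>UNIV. P' x) = 1" using dP' by (auto simp: is_dist_def)
      have Q'nn: "\<And>x. Q' x \<ge> 0" and sQ': "(\<Sum>x\<in>UNIV. Q' x) = 1" using dQ' by (auto simp: is_dist_def)
      have P'le: "c * P' x \<le> P x" for x
        using eP[of x] dP'' assms(3) by (simp add: is_dist_def c_def)
      have Q'le: "c * Q' x \<le> Q x" for x
        using eQ[of x] dQ'' assms(3) by (simp add: is_dist_def c_def)
      have P'z: "P' x = 0" if "Qt x = 0" for x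
      proof -
        from Qt0[OF that] have "Q x = 0 \<or> P x = 0" by simp
        then show ?thesis
        proof
          assume "Q x = 0"
          then have "Q' x \<le> 0" using Q'le[of x] c by (simp add: mult_le_0_iff)
          then have "Q' x = 0" using Q'nn[of x] by linarith
          then show ?thesis using ac by simp
        next
          assume "P x = 0"
          then have "P' x \<le> 0" using P'le[of x] c by (simp add: mult_le_0_iff)
          then show ?thesis using P'nn[of x] by linarith
        qed
      qed
      define S1 where "S1 = (\<Sum>x\<in>UNIV. P' x powr \<alpha> * Q' x powr (1 - \<alpha>))"
      have S1L: "L P' Q' \<le> S1" unfolding S1_def L_def
        by (rule sum_mono, rule phi_tangent[OF alpha r_pos P'nn Q'nn]) (use ac in auto)
      define M where "M = \<alpha> * lamP powr (\<alpha> - 1)"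
      define m where "m = (1 - \<alpha>) * lamQ powr \<alpha>"
      have pw: "\<alpha> * r x powr (\<alpha> - 1) * P' x + (1 - \<alpha>) * r x powr \<alpha> * Q' x
          - (\<alpha> * r x powr (\<alpha> - 1) * p0 x + (1 - \<alpha>) * r x powr \<alpha> * q0 x)
          \<ge> M * (P' x - p0 x) + m * (Q' x - q0 x)" for x
      proof -
        have A: "(\<alpha> * r x powr (\<alpha> - 1) - M) * (P' x - p0 x) \<ge> 0"
        proof (cases "Qt x > 0")
          case False
          then have "Qt x = 0" using Qt_nn[of x] by simp
          then show ?thesis using P'z Qt0 by (simp add: p0_def)
        next
          case True
          have le: "\<alpha> * r x powr (\<alpha> - 1) - M \<le> 0"
            using powr_mono2[of "\<alpha> - 1" "r x" lamP] alpha r_pos[of x] r_le[of x]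
            by (simp add: M_def)
          show ?thesis
          proof (cases "Pt x < P x")
            case True
            then show ?thesis using r_eqP[OF True \<open>Qt x > 0\<close>] by (simp add: M_def)
          next
            case False
            then have "Pt x = P x" using Pt_le[of x] by simp
            then have "P' x - p0 x \<le> 0" using P'le[of x] c by (simp add: p0_def le_divide_eq mult.commute)
            then show ?thesis using le by (simp add: mult_nonpos_nonpos)
          qed
        qed
        have B: "((1 - \<alpha>) * r x powr \<alpha> - m) * (Q' x - q0 x) \<ge> 0"
        proof -
          have "lamQ powr \<alpha> \<le> r x powr \<alpha>"
            using powr_mono2[of \<alpha> lamQ "r x"] alpha lamQ_pos r_ge[of x] by simp
          then have le: "(1 - \<alpha>) * r x powr \<alpha> - m \<le> 0"
            using alpha by (simp add: m_def mult_left_mono_neg)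
          show ?thesis
          proof (cases "Qt x < Q x")
            case True
            then show ?thesis using r_eqQ[OF True] by (simp add: m_def)
          next
            case False
            then have "Qt x = Q x" using Qt_le[of x] by simp
            then have "Q' x - q0 x \<le> 0" using Q'le[of x] c by (simp add: q0_def le_divide_eq mult.commute)
            then show ?thesis using le by (simp add: mult_nonpos_nonpos)
          qed
        qed
        show ?thesis using A B by (simp add: algebra_simps)
      qed
      have "L P' Q' - L p0 q0 \<ge> (\<Sum>x\<in>UNIV. M * (P' x - p0 x) + m * (Q' x - q0 x))"
        unfolding L_def sum_subtractf[symmetric] by (rule sum_mono) (rule pw)
      also have "(\<Sum>x\<in>UNIV. M * (P' x - p0 x) + m * (Q' x - q0 x)) = 0"
        by (simp add: sum.distrib sum_distrib_left[symmetric] sum_subtractf sP' sQ' sp0 sq0)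
      finally have "S0 \<le> S1" using S0L S1L by simp
      then have "ln S0 \<le> ln S1" using S0pos by simp
      then have "ln S0 / (\<alpha> - 1) \<le> ln S1 / (\<alpha> - 1)" using alpha by (simp add: divide_right_mono)
      then show ?thesis using cand ac by (simp add: renyi_div_def S1_def)
    qed
    show ?thesis unfolding approx_renyi_div_def
    proof (rule antisym)
      show "(INF PQ\<in>{(P', Q'). approx_feasible \<delta> P Q P' Q'}. renyi_div \<alpha> (fst PQ) (snd PQ)) \<le> renyi_div \<alpha> p0 q0"
        by (rule INF_lower2[of "(p0, q0)"]) (use feas in auto)
      show "renyi_div \<alpha> p0 q0 \<le> (INF PQ\<in>{(P', Q'). approx_feasible \<delta> P Q P' Q'}. renyi_div \<alpha> (fst PQ) (snd PQ))"
        by (rule INF_greatest) (use lower in auto)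
    qed
  qed
  show ?thesis unfolding p0_eq q0_eq using lamP1 lamQ1 feas main by simp
qed

end
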